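(* Let $\mathcal{D}$ be a liability category, let $N=(G,X,\lambda,\iota;\delta,\hat\alpha)$ be a liability network in $\mathcal{D}$ with $G=(V,E,s,t)$, and let $\mathcal{L}$ be its liability sheaf on $\mathcal{H}_G$. Set $P=\prod_{v\in V}X_v$ and $B=\prod_{e\in E}X_{s(e)}^{\lambda_e}$, and define $D:P\to B$ and $A:B\to P$ componentwise by $D_e=\delta_e\circ\pi_{s(e)}$ (i.e. $D(\mathbf{x})_e=\delta_e(x_{s(e)})$) and $A_v=\alpha_v\circ\langle\pi_e\rangle_{t(e)=v}$ (i.e. $A(\mathbf{p})_v=\alpha_v((p_e)_{t(e)=v})$), and let $\Phi=A\circ D:P\to P$. Then there is a canonical isomorphism in $\mathcal{D}$ \[ \lim_{\mathcal{I}(\mathcal{H}_G)}\mathcal{L}\ \cong\ \mathrm{Eq}(\mathrm{id}_P,\Phi). \]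
   Context: A liability category is a category $\mathcal{D}$ such that: (1) $\mathcal{D}$ has a terminal object $1$, all finite products, and equalizers; (2) for each object $P$ the set $\mathrm{Hom}(1,P)$ carries a partial order, and for each $f:P\to Q$ the map $\rho\mapsto f\circ\rho$ is order-preserving; (3) for each $P$ a distinguished pullback-stable class $\mathcal{S}_P$ of monomorphisms into $P$ (constraint subobjects); (4) for each $P$ a bound selector $\beta_P:\mathrm{Hom}(1,P)\to\mathcal{S}_P$; (5) for finite families, $\mathrm{Hom}(1,\prod_iP_i)\to\prod_i\mathrm{Hom}(1,P_i)$ is an order isomorphism for the componentwise order. A liability network in $\mathcal{D}$ is $N=(G,X,\lambda,\iota;\delta,\hat\alpha)$ with $G=(V,E,s,t)$ a finite directed graph, payment objects $X_v$, liability morphisms $\lambda_e:1\to X_{s(e)}$, exogenous resources $\iota_v:1\to X_v$, distributors $\delta_e:X_{s(e)}\to X_{s(e)}^{\lambda_e}$ where $X_{s(e)}^{\lambda_e}$ is the domain of $\beta_{X_{s(e)}}(\lambda_e)$, and aggregators $\hat\alpha_v:X_v\times\prod_{t(e)=v}X_{s(e)}^{\lambda_e}\to X_v$; the partial aggregator is $\alpha_v=\hat\alpha_v\circ(\iota_v\times\mathrm{id}):\prod_{t(e)=v}X_{s(e)}^{\lambda_e}\to X_v$, empty products being $1$. The liability hypergraph $\mathcal{H}_G$ has vertices $V\sqcup\{e^*:e\in E\}$ and hyperedges $h_v^\delta$ (source $\{v\}$, target $\{e^*:s(e)=v\}$) and $h_v^\alpha$ (empty source, target $\{e^*:t(e)=v\}\cup\{v\}$).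 Its incidence category $\mathcal{I}(\mathcal{H}_G)$ has objects the vertices and hyperedges and exactly one non-identity morphism $h\to w$ for each incidence of vertex $w$ in the source or target of hyperedge $h$ (no other composites). The liability sheaf $\mathcal{L}:\mathcal{I}(\mathcal{H}_G)\to\mathcal{D}$ has $\mathcal{L}(v)=X_v$, $\mathcal{L}(e^* )=X_{s(e)}^{\lambda_e}$, $\mathcal{L}(h_v^\delta)=X_v$, $\mathcal{L}(h_v^\alpha)=\prod_{t(e)=v}X_{s(e)}^{\lambda_e}$, with $\mathcal{L}(h_v^\delta\to v)=\mathrm{id}$, $\mathcal{L}(h_v^\delta\to e^* )=\delta_e$, $\mathcal{L}(h_v^\alpha\to e^* )=\pi_e$, $\mathcal{L}(h_v^\alpha\to v)=\alpha_v$. $\mathrm{Eq}(f,g)$ denotes the equalizer of a parallel pair. *)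

theory Defs
  imports Main
begin

record ('o, 'a) cat =
  Ob   :: "'o set"
  Ar   :: "'a set"
  dom  :: "'a \<Rightarrow> 'o"
  cod  :: "'a \<Rightarrow> 'o"
  idt  :: "'o \<Rightarrow> 'a"
  comp :: "'a \<Rightarrow> 'a \<Rightarrow> 'a"   (* comp C g f = g o f *)

definition hom :: "('o,'a) cat \<Rightarrow> 'o \<Rightarrow> 'o \<Rightarrow> 'a set" where
  "hom C x y = {f \<in> Ar C. dom C f = x \<and> cod C f = y}"

definition category :: "('o,'a) cat \<Rightarrow> bool" where
  "category C \<longleftrightarrow>
     (\<forall>f\<in>Ar C. dom C f \<in> Ob C \<and> cod C f \<in> Ob C) \<and>
     (\<forall>x\<in>Ob C. idt C x \<in> hom C x x) \<and>
     (\<forall>x y z f g. f \<in> hom C x y \<longrightarrow> g \<in> hom C y z \<longrightarrow> comp C g f \<in> hom C x z) \<and>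
     (\<forall>w x y z f g h. f \<in> hom C w x \<longrightarrow> g \<in> hom C x y \<longrightarrow> h \<in> hom C y z \<longrightarrow>
        comp C h (comp C g f) = comp C (comp C h g) f) \<and>
     (\<forall>x y f. f \<in> hom C x y \<longrightarrow> comp C (idt C y) f = f \<and> comp C f (idt C x) = f)"

definition mono :: "('o,'a) cat \<Rightarrow> 'a \<Rightarrow> bool" where
  "mono C m \<longleftrightarrow> m \<in> Ar C \<and>
     (\<forall>y g h. g \<in> hom C y (dom C m) \<longrightarrow> h \<in> hom C y (dom C m) \<longrightarrow>
        comp C m g = comp C m h \<longrightarrow> g = h)"

definition iso :: "('o,'a) cat \<Rightarrow> 'a \<Rightarrow> bool" where
  "iso C f \<longleftrightarrow> f \<in> Ar C \<and> (\<exists>g \<in> hom C (cod C f) (dom C f).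
      comp C g f = idt C (dom C f) \<and> comp C f g = idt C (cod C f))"

definition is_terminal :: "('o,'a) cat \<Rightarrow> 'o \<Rightarrow> bool" where
  "is_terminal C T \<longleftrightarrow> T \<in> Ob C \<and> (\<forall>x\<in>Ob C. \<exists>!f. f \<in> hom C x T)"

definition is_product :: "('o,'a) cat \<Rightarrow> 'i set \<Rightarrow> ('i \<Rightarrow> 'o) \<Rightarrow> 'o \<Rightarrow> ('i \<Rightarrow> 'a) \<Rightarrow> bool" where
  "is_product C I X P pr \<longleftrightarrow> P \<in> Ob C \<and> (\<forall>i\<in>I. pr i \<in> hom C P (X i)) \<and>
     (\<forall>Y\<in>Ob C. \<forall>f. (\<forall>i\<in>I. f i \<in> hom C Y (X i)) \<longrightarrow>
        (\<exists>!u. u \<in> hom C Y P \<and> (\<forall>i\<in>I. comp C (pr i) u = f i)))"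

definition tuple :: "('o,'a) cat \<Rightarrow> 'i set \<Rightarrow> 'o \<Rightarrow> ('i \<Rightarrow> 'a) \<Rightarrow> 'o \<Rightarrow> ('i \<Rightarrow> 'a) \<Rightarrow> 'a" where
  "tuple C I P pr Y f = (THE u. u \<in> hom C Y P \<and> (\<forall>i\<in>I. comp C (pr i) u = f i))"

definition is_equalizer :: "('o,'a) cat \<Rightarrow> 'a \<Rightarrow> 'a \<Rightarrow> 'o \<Rightarrow> 'a \<Rightarrow> bool" where
  "is_equalizer C f g Q q \<longleftrightarrow>
     f \<in> Ar C \<and> g \<in> Ar C \<and> dom C f = dom C g \<and> cod C f = cod C g \<and>
     q \<in> hom C Q (dom C f) \<and> comp C f q = comp C g q \<and>
     (\<forall>Y z. z \<in> hom C Y (dom C f) \<longrightarrow> comp C f z = comp C g z \<longrightarrow>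
        (\<exists>!u. u \<in> hom C Y Q \<and> comp C q u = z))"

definition is_pullback :: "('o,'a) cat \<Rightarrow> 'a \<Rightarrow> 'a \<Rightarrow> 'a \<Rightarrow> 'a \<Rightarrow> bool" where
  "is_pullback C f m m' f' \<longleftrightarrow>
     f \<in> Ar C \<and> m \<in> Ar C \<and> cod C f = cod C m \<and>
     m' \<in> hom C (dom C m') (dom C f) \<and> f' \<in> hom C (dom C m') (dom C m) \<and>
     comp C f m' = comp C m f' \<and>
     (\<forall>Y a b. a \<in> hom C Y (dom C f) \<longrightarrow> b \<in> hom C Y (dom C m) \<longrightarrow>
        comp C f a = comp C m b \<longrightarrow>
        (\<exists>!u. u \<in> hom C Y (dom C m') \<and> comp C m' u = a \<and> comp C f' u = b))"

text \<open>one: terminal object; le P: partial order on Hom(1,P); S P: constraint subobjects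
  (monomorphisms into P); bsel P: the bound selector beta_P.  Finite products are
  expressed as products of families indexed by {..<n} (every finite family is, up
  to reindexing, of this form).\<close>
definition liability_category ::
  "('o,'a) cat \<Rightarrow> 'o \<Rightarrow> ('o \<Rightarrow> 'a \<Rightarrow> 'a \<Rightarrow> bool) \<Rightarrow> ('o \<Rightarrow> 'a set) \<Rightarrow> ('o \<Rightarrow> 'a \<Rightarrow> 'a) \<Rightarrow> bool"
where
  "liability_category C one le S bsel \<longleftrightarrow>
     category C \<and>
     \<comment> \<open>(1) terminal object, finite products, equalizers\<close>
     is_terminal C one \<and>
     (\<forall>(n::nat) X. (\<forall>i<n. X i \<in> Ob C) \<longrightarrow> (\<exists>P pr. is_product C {..<n} X P pr)) \<and>
     (\<forall>f g. f \<in> Ar C \<longrightarrow> g \<in> Ar C \<longrightarrow> dom C f = dom C g \<longrightarrow> cod C f = cod C g \<longrightarrow>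
        (\<exists>Q q. is_equalizer C f g Q q)) \<and>
     \<comment> \<open>(2) partial orders on global elements, preserved by postcomposition\<close>
     (\<forall>P\<in>Ob C.
        (\<forall>x\<in>hom C one P. le P x x) \<and>
        (\<forall>x\<in>hom C one P. \<forall>y\<in>hom C one P. le P x y \<longrightarrow> le P y x \<longrightarrow> x = y) \<and>
        (\<forall>x\<in>hom C one P. \<forall>y\<in>hom C one P. \<forall>z\<in>hom C one P.
            le P x y \<longrightarrow> le P y z \<longrightarrow> le P x z)) \<and>
     (\<forall>P Q f x y. f \<in> hom C P Q \<longrightarrow> x \<in> hom C one P \<longrightarrow> y \<in> hom C one P \<longrightarrow>
        le P x y \<longrightarrow> le Q (comp C f x) (comp C f y)) \<and>
     \<comment> \<open>(3) pullback-stable classes of monomorphisms\<close>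
     (\<forall>P\<in>Ob C. \<forall>m\<in>S P. mono C m \<and> cod C m = P) \<and>
     (\<forall>P Q f m m' f'. m \<in> S P \<longrightarrow> f \<in> hom C Q P \<longrightarrow> is_pullback C f m m' f' \<longrightarrow> m' \<in> S Q) \<and>
     \<comment> \<open>(4) bound selectors\<close>
     (\<forall>P\<in>Ob C. \<forall>x\<in>hom C one P. bsel P x \<in> S P) \<and>
     \<comment> \<open>(5) global elements of finite products carry the componentwise order\<close>
     (\<forall>(n::nat) X P pr. is_product C {..<n} X P pr \<longrightarrow>
        (\<forall>x\<in>hom C one P. \<forall>y\<in>hom C one P.
           le P x y \<longleftrightarrow> (\<forall>i<n. le (X i) (comp C (pr i) x) (comp C (pr i) y))))"

text \<open>X^{lambda_e}: domain of the bound selected by lambda_e.\<close>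
definition Xlam :: "('o,'a) cat \<Rightarrow> ('o \<Rightarrow> 'a \<Rightarrow> 'a) \<Rightarrow> ('e \<Rightarrow> 'v) \<Rightarrow> ('v \<Rightarrow> 'o) \<Rightarrow> ('e \<Rightarrow> 'a) \<Rightarrow> 'e \<Rightarrow> 'o"
  where "Xlam C bsel s X lam e = dom C (bsel (X (s e)) (lam e))"

text \<open>Binary product X_v x Pin_v encoded as a product indexed by bool
  (True: X_v, False: Pin_v).\<close>
definition bin :: "'o \<Rightarrow> 'o \<Rightarrow> bool \<Rightarrow> 'o" where
  "bin a b = (\<lambda>i. if i then a else b)"

text \<open>Partial aggregator alpha_v = hat alpha_v o (iota_v x id), where the domain
  1 x Pin_v is identified with Pin_v: alpha_v = hat alpha_v o <iota_v o !, id>.\<close>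
definition partial_agg ::
  "('o,'a) cat \<Rightarrow> 'o \<Rightarrow> 'o \<Rightarrow> 'o \<Rightarrow> 'o \<Rightarrow> (bool \<Rightarrow> 'a) \<Rightarrow> 'a \<Rightarrow> 'a \<Rightarrow> 'a" where
  "partial_agg C one Xv Pv XP prXP iota ahat =
     comp C ahat (tuple C UNIV XP prXP Pv
        (\<lambda>i. if i then comp C iota (THE u. u \<in> hom C Pv one) else idt C Pv))"

definition net_alpha ::
  "('o,'a) cat \<Rightarrow> 'o \<Rightarrow> ('v \<Rightarrow> 'o) \<Rightarrow> ('v \<Rightarrow> 'o) \<Rightarrow> ('v \<Rightarrow> 'o) \<Rightarrow> ('v \<Rightarrow> bool \<Rightarrow> 'a) \<Rightarrow>
   ('v \<Rightarrow> 'a) \<Rightarrow> ('v \<Rightarrow> 'a) \<Rightarrow> 'v \<Rightarrow> 'a" where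
  "net_alpha C one X Pin XP prXP iota ahat v =
     partial_agg C one (X v) (Pin v) (XP v) (prXP v) (iota v) (ahat v)"

definition liability_network ::
  "('o,'a) cat \<Rightarrow> 'o \<Rightarrow> ('o \<Rightarrow> 'a set) \<Rightarrow> ('o \<Rightarrow> 'a \<Rightarrow> 'a) \<Rightarrow>
   'v set \<Rightarrow> 'e set \<Rightarrow> ('e \<Rightarrow> 'v) \<Rightarrow> ('e \<Rightarrow> 'v) \<Rightarrow>
   ('v \<Rightarrow> 'o) \<Rightarrow> ('e \<Rightarrow> 'a) \<Rightarrow> ('v \<Rightarrow> 'a) \<Rightarrow> ('e \<Rightarrow> 'a) \<Rightarrow>
   ('v \<Rightarrow> 'o) \<Rightarrow> ('v \<Rightarrow> 'e \<Rightarrow> 'a) \<Rightarrow> ('v \<Rightarrow> 'o) \<Rightarrow> ('v \<Rightarrow> bool \<Rightarrow> 'a) \<Rightarrow> ('v \<Rightarrow> 'a) \<Rightarrow> bool"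
where
  "liability_network C one S bsel V E s t X lam iota delta Pin prIn XP prXP ahat \<longleftrightarrow>
     finite V \<and> finite E \<and> (\<forall>e\<in>E. s e \<in> V \<and> t e \<in> V) \<and>
     (\<forall>v\<in>V. X v \<in> Ob C) \<and>
     (\<forall>e\<in>E. lam e \<in> hom C one (X (s e))) \<and>
     (\<forall>v\<in>V. iota v \<in> hom C one (X v)) \<and>
     (\<forall>e\<in>E. delta e \<in> hom C (X (s e)) (Xlam C bsel s X lam e)) \<and>
     \<comment> \<open>Pin v = prod_{t(e)=v} X^{lambda_e} (the terminal object if empty)\<close>
     (\<forall>v\<in>V. is_product C {e\<in>E. t e = v} (Xlam C bsel s X lam) (Pin v) (prIn v)) \<and>
     \<comment> \<open>XP v = X_v x Pin v\<close>
     (\<forall>v\<in>V. is_product C UNIV (bin (X v) (Pin v)) (XP v) (prXP v)) \<and>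
     (\<forall>v\<in>V. ahat v \<in> hom C (XP v) (X v))"

text \<open>Objects of the incidence category of the liability hypergraph.\<close>
datatype ('v, 'e) inode = Vx 'v | Es 'e | Hd 'v | Ha 'v

definition inodes :: "'v set \<Rightarrow> 'e set \<Rightarrow> ('v,'e) inode set" where
  "inodes V E = Vx ` V \<union> Es ` E \<union> Hd ` V \<union> Ha ` V"

text \<open>Non-identity morphisms h -> w of the incidence category (one per incidence).\<close>
definition incid :: "'v set \<Rightarrow> 'e set \<Rightarrow> ('e \<Rightarrow> 'v) \<Rightarrow> ('e \<Rightarrow> 'v) \<Rightarrow>
    (('v,'e) inode \<times> ('v,'e) inode) set" where
  "incid V E s t =
     {(Hd v, Vx v) | v. v \<in> V} \<union>
     {(Hd (s e), Es e) | e. e \<in> E} \<union>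
     {(Ha (t e), Es e) | e. e \<in> E} \<union>
     {(Ha v, Vx v) | v. v \<in> V}"

fun sheaf_ob :: "('e \<Rightarrow> 'o) \<Rightarrow> ('v \<Rightarrow> 'o) \<Rightarrow> ('v \<Rightarrow> 'o) \<Rightarrow> ('v,'e) inode \<Rightarrow> 'o" where
  "sheaf_ob XL X Pin (Vx v) = X v"
| "sheaf_ob XL X Pin (Es e) = XL e"
| "sheaf_ob XL X Pin (Hd v) = X v"
| "sheaf_ob XL X Pin (Ha v) = Pin v"

fun sheaf_mor :: "('o,'a) cat \<Rightarrow> ('v \<Rightarrow> 'o) \<Rightarrow> ('e \<Rightarrow> 'a) \<Rightarrow> ('v \<Rightarrow> 'e \<Rightarrow> 'a) \<Rightarrow> ('v \<Rightarrow> 'a) \<Rightarrow>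
    ('v,'e) inode \<Rightarrow> ('v,'e) inode \<Rightarrow> 'a" where
  "sheaf_mor C X delta prIn alpha (Hd v) (Vx w) = idt C (X v)"
| "sheaf_mor C X delta prIn alpha (Hd v) (Es e) = delta e"
| "sheaf_mor C X delta prIn alpha (Ha v) (Es e) = prIn v e"
| "sheaf_mor C X delta prIn alpha (Ha v) (Vx w) = alpha v"
| "sheaf_mor C X delta prIn alpha _ _ = undefined"

text \<open>Cones and limits of a diagram F over a category whose non-identity morphisms
  are given by the set Mor of pairs (h,w) (no nontrivial composites), with object
  part Fo and morphism part Fm.\<close>
definition is_cone :: "('o,'a) cat \<Rightarrow> 'n set \<Rightarrow> ('n \<times> 'n) set \<Rightarrow> ('n \<Rightarrow> 'o) \<Rightarrow>
    ('n \<Rightarrow> 'n \<Rightarrow> 'a) \<Rightarrow> 'o \<Rightarrow> ('n \<Rightarrow> 'a) \<Rightarrow> bool" where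
  "is_cone C Nd Mor Fo Fm L c \<longleftrightarrow> L \<in> Ob C \<and>
     (\<forall>x\<in>Nd. c x \<in> hom C L (Fo x)) \<and>
     (\<forall>(h,w)\<in>Mor. comp C (Fm h w) (c h) = c w)"

definition is_limit :: "('o,'a) cat \<Rightarrow> 'n set \<Rightarrow> ('n \<times> 'n) set \<Rightarrow> ('n \<Rightarrow> 'o) \<Rightarrow>
    ('n \<Rightarrow> 'n \<Rightarrow> 'a) \<Rightarrow> 'o \<Rightarrow> ('n \<Rightarrow> 'a) \<Rightarrow> bool" where
  "is_limit C Nd Mor Fo Fm L c \<longleftrightarrow> is_cone C Nd Mor Fo Fm L c \<and>
     (\<forall>L' c'. is_cone C Nd Mor Fo Fm L' c' \<longrightarrow>
        (\<exists>!u. u \<in> hom C L' L \<and> (\<forall>x\<in>Nd. comp C (c x) u = c' x)))"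

end

theory Submission
  imports Defs
begin


lemma cat_comp: "category C \<Longrightarrow> f \<in> hom C x y \<Longrightarrow> g \<in> hom C y z \<Longrightarrow> comp C g f \<in> hom C x z"
  unfolding category_def by blast
lemma cat_assoc: "category C \<Longrightarrow> f \<in> hom C w x \<Longrightarrow> g \<in> hom C x y \<Longrightarrow> h \<in> hom C y z \<Longrightarrow>
   comp C h (comp C g f) = comp C (comp C h g) f"
  unfolding category_def by blast
lemma cat_idl: "category C \<Longrightarrow> f \<in> hom C x y \<Longrightarrow> comp C (idt C y) f = f"
  unfolding category_def by blast
lemma cat_idr: "category C \<Longrightarrow> f \<in> hom C x y \<Longrightarrow> comp C f (idt C x) = f"
  unfolding category_def by blast
lemma cat_id: "category C \<Longrightarrow> x \<in> Ob C \<Longrightarrow> idt C x \<in> hom C x x"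
  unfolding category_def by blast
lemma hom_ob: "category C \<Longrightarrow> f \<in> hom C x y \<Longrightarrow> x \<in> Ob C \<and> y \<in> Ob C"
  unfolding category_def hom_def by auto
lemma ar_hom: "f \<in> Ar C \<Longrightarrow> f \<in> hom C (dom C f) (cod C f)"
  unfolding hom_def by auto

lemma prod_tuple:
  assumes "is_product C I Xf P pr" "Y \<in> Ob C" "\<forall>i\<in>I. f i \<in> hom C Y (Xf i)"
  shows "tuple C I P pr Y f \<in> hom C Y P \<and> (\<forall>i\<in>I. comp C (pr i) (tuple C I P pr Y f) = f i)"
proof -
  from assms have "\<exists>!u. u \<in> hom C Y P \<and> (\<forall>i\<in>I. comp C (pr i) u = f i)"
    unfolding is_product_def by blast
  then show ?thesis unfolding tuple_def by (rule theI')
qed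

lemma ex1_eq: "\<exists>!x. Q x \<Longrightarrow> Q a \<Longrightarrow> Q b \<Longrightarrow> a = b" by blast
lemma prod_U: "is_product C I Xf P pr \<Longrightarrow> Y \<in> Ob C \<Longrightarrow> (\<forall>i\<in>I. f i \<in> hom C Y (Xf i)) \<Longrightarrow>
   \<exists>!u. u \<in> hom C Y P \<and> (\<forall>i\<in>I. comp C (pr i) u = f i)"
  unfolding is_product_def by blast
lemma lim_U: "is_limit C Nd Mor Fo Fm L c \<Longrightarrow> is_cone C Nd Mor Fo Fm L' c' \<Longrightarrow>
   \<exists>!u. u \<in> hom C L' L \<and> (\<forall>x\<in>Nd. comp C (c x) u = c' x)"
  unfolding is_limit_def by blast
lemma prod_pr: "is_product C I Xf P pr \<Longrightarrow> i \<in> I \<Longrightarrow> pr i \<in> hom C P (Xf i)"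
  unfolding is_product_def by blast
lemma prod_ob: "is_product C I Xf P pr \<Longrightarrow> P \<in> Ob C"
  unfolding is_product_def by blast

lemma prod_uniq:
  assumes "category C" "is_product C I Xf P pr" "u \<in> hom C Y P" "u' \<in> hom C Y P"
    "\<forall>i\<in>I. comp C (pr i) u = comp C (pr i) u'"
  shows "u = u'"
proof -
  have Y: "Y \<in> Ob C" using hom_ob[OF assms(1,3)] by blast
  have "\<forall>i\<in>I. comp C (pr i) u \<in> hom C Y (Xf i)"
    using cat_comp[OF assms(1,3) prod_pr[OF assms(2)]] by blast
  from prod_U[OF assms(2) Y this] have "\<exists>!w. w \<in> hom C Y P \<and> (\<forall>i\<in>I. comp C (pr i) w = comp C (pr i) u)" .
  then show ?thesis by (rule ex1_eq) (use assms in auto)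
qed

lemma prod_tuple_eq:
  assumes "category C" "is_product C I Xf P pr" "u \<in> hom C Y P" "\<forall>i\<in>I. comp C (pr i) u = f i"
  shows "tuple C I P pr Y f = u"
proof -
  have Y: "Y \<in> Ob C" using hom_ob[OF assms(1,3)] by blast
  have "\<forall>i\<in>I. f i \<in> hom C Y (Xf i)"
  proof
    fix i assume i: "i \<in> I"
    show "f i \<in> hom C Y (Xf i)" using assms(4) i cat_comp[OF assms(1,3) prod_pr[OF assms(2) i]] by simp
  qed
  from prod_tuple[OF assms(2) Y this] have "tuple C I P pr Y f \<in> hom C Y P \<and> (\<forall>i\<in>I. comp C (pr i) (tuple C I P pr Y f) = f i)" .
  then show ?thesis by (intro prod_uniq[OF assms(1,2)]) (use assms(3,4) in auto)
qed

lemma eq_univ: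
  assumes "is_equalizer C f g Q q" "z \<in> hom C Y (dom C f)" "comp C f z = comp C g z"
  shows "\<exists>u. u \<in> hom C Y Q \<and> comp C q u = z"
  using assms unfolding is_equalizer_def by blast

lemma eq_q: "is_equalizer C f g Q q \<Longrightarrow> q \<in> hom C Q (dom C f) \<and> comp C f q = comp C g q"
  unfolding is_equalizer_def by blast

lemma eq_uniq:
  assumes "category C" "is_equalizer C f g Q q" "u \<in> hom C Y Q" "u' \<in> hom C Y Q" "comp C q u = comp C q u'"
  shows "u = u'"
proof -
  have q: "q \<in> hom C Q (dom C f)" and fq: "comp C f q = comp C g q" using eq_q[OF assms(2)] by auto
  have f: "f \<in> hom C (dom C f) (cod C f)" and g: "g \<in> hom C (dom C f) (cod C f)"
    using assms(2) unfolding is_equalizer_def hom_def by auto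
  have z: "comp C q u \<in> hom C Y (dom C f)" using cat_comp[OF assms(1,3) q] .
  have "comp C f (comp C q u) = comp C g (comp C q u)"
    using cat_assoc[OF assms(1) assms(3) q f] cat_assoc[OF assms(1) assms(3) q g] fq by simp
  with assms(2) z have "\<exists>!w. w \<in> hom C Y Q \<and> comp C q w = comp C q u"
    unfolding is_equalizer_def by blast
  then show ?thesis by (rule ex1_eq) (use assms(3,4,5) in simp_all)
qed

lemma lim_uniq:
  assumes "category C" "is_limit C Nd Mor Fo Fm L c"
    "\<forall>(h,w)\<in>Mor. h \<in> Nd \<and> w \<in> Nd \<and> Fm h w \<in> hom C (Fo h) (Fo w)"
    "u \<in> hom C L' L" "u' \<in> hom C L' L" "\<forall>x\<in>Nd. comp C (c x) u = comp C (c x) u'"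
  shows "u = u'"
proof -
  have cone: "is_cone C Nd Mor Fo Fm L c" using assms(2) unfolding is_limit_def by blast
  have L': "L' \<in> Ob C" using hom_ob[OF assms(1,4)] by blast
  have "is_cone C Nd Mor Fo Fm L' (\<lambda>x. comp C (c x) u)"
    unfolding is_cone_def
  proof (intro conjI L' ballI)
    fix x assume "x \<in> Nd"
    then have "c x \<in> hom C L (Fo x)" using cone unfolding is_cone_def by blast
    then show "comp C (c x) u \<in> hom C L' (Fo x)"
      using cat_comp[OF assms(1,4)] by blast
  next
    fix p assume p: "p \<in> Mor"
    obtain h w where hw: "p = (h,w)" by (cases p)
    have *: "h \<in> Nd" "w \<in> Nd" "Fm h w \<in> hom C (Fo h) (Fo w)" using assms(3) p hw by auto
    have ch: "c h \<in> hom C L (Fo h)" using cone *(1) unfolding is_cone_def by blast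
    have cw: "comp C (Fm h w) (c h) = c w"
      using cone p unfolding is_cone_def hw by blast
    show "case p of (h, w) \<Rightarrow> comp C (Fm h w) (comp C (c h) u) = comp C (c w) u"
      unfolding hw using cat_assoc[OF assms(1) assms(4) ch *(3)] cw by simp
  qed
  from lim_U[OF assms(2) this] have "\<exists>!w. w \<in> hom C L' L \<and> (\<forall>x\<in>Nd. comp C (c x) w = comp C (c x) u)" .
  then show ?thesis by (rule ex1_eq) (use assms in auto)
qed



lemma incid_E:
  assumes "p \<in> incid V E s t"
  obtains (hdv) v where "v \<in> V" "p = (Hd v, Vx v)"
    | (hde) e where "e \<in> E" "p = (Hd (s e), Es e)"
    | (hae) e where "e \<in> E" "p = (Ha (t e), Es e)"
    | (hav) v where "v \<in> V" "p = (Ha v, Vx v)"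
  using assms unfolding incid_def by blast

lemma inodes_E:
  assumes "x \<in> inodes V E"
  obtains (vx) v where "v \<in> V" "x = Vx v"
    | (es) e where "e \<in> E" "x = Es e"
    | (hd) v where "v \<in> V" "x = Hd v"
    | (ha) v where "v \<in> V" "x = Ha v"
  using assms unfolding inodes_def by blast

lemma inodes_simps[simp]:
  "Vx v \<in> inodes V E \<longleftrightarrow> v \<in> V" "Hd v \<in> inodes V E \<longleftrightarrow> v \<in> V"
  "Ha v \<in> inodes V E \<longleftrightarrow> v \<in> V" "Es e \<in> inodes V E \<longleftrightarrow> e \<in> E"
  unfolding inodes_def by auto

locale LNW =
  fixes C :: "('o,'a) cat" and one :: 'o
    and le :: "'o \<Rightarrow> 'a \<Rightarrow> 'a \<Rightarrow> bool" and S :: "'o \<Rightarrow> 'a set" and bsel :: "'o \<Rightarrow> 'a \<Rightarrow> 'a"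
    and V :: "'v set" and E :: "'e set" and s t :: "'e \<Rightarrow> 'v"
    and X :: "'v \<Rightarrow> 'o" and lam :: "'e \<Rightarrow> 'a" and iota :: "'v \<Rightarrow> 'a" and delta :: "'e \<Rightarrow> 'a"
    and Pin :: "'v \<Rightarrow> 'o" and prIn :: "'v \<Rightarrow> 'e \<Rightarrow> 'a"
    and XP :: "'v \<Rightarrow> 'o" and prXP :: "'v \<Rightarrow> bool \<Rightarrow> 'a" and ahat :: "'v \<Rightarrow> 'a"
    and P :: 'o and prP :: "'v \<Rightarrow> 'a" and B :: 'o and prB :: "'e \<Rightarrow> 'a"
  assumes LC: "liability_category C one le S bsel"
    and LN: "liability_network C one S bsel V E s t X lam iota delta Pin prIn XP prXP ahat"
    and HP: "is_product C V X P prP"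
    and HB: "is_product C E (Xlam C bsel s X lam) B prB"
begin

abbreviation "XL \<equiv> Xlam C bsel s X lam"
abbreviation "alpha \<equiv> net_alpha C one X Pin XP prXP iota ahat"
abbreviation "tin v Y f \<equiv> tuple C {e\<in>E. t e = v} (Pin v) (prIn v) Y f"
abbreviation "Din \<equiv> tuple C E B prB P (\<lambda>e. comp C (delta e) (prP (s e)))"
abbreviation "Ain \<equiv> tuple C V P prP B (\<lambda>v. comp C (alpha v) (tin v B prB))"
abbreviation "AD \<equiv> comp C Ain Din"
abbreviation "Nd \<equiv> inodes V E"
abbreviation "Mor \<equiv> incid V E s t"
abbreviation "Fo \<equiv> sheaf_ob XL X Pin"
abbreviation "Fm \<equiv> sheaf_mor C X delta prIn alpha"

lemma cat: "category C" using LC unfolding liability_category_def by blast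
lemma termin: "is_terminal C one" using LC unfolding liability_category_def by blast
lemma eqex: "f \<in> Ar C \<Longrightarrow> g \<in> Ar C \<Longrightarrow> dom C f = dom C g \<Longrightarrow> cod C f = cod C g \<Longrightarrow>
   \<exists>Q q. is_equalizer C f g Q q"
  using LC unfolding liability_category_def by (elim conjE) (rule mp[OF mp[OF mp[OF mp]]], blast+)

lemma sE: "e \<in> E \<Longrightarrow> s e \<in> V" using LN unfolding liability_network_def by blast
lemma tE: "e \<in> E \<Longrightarrow> t e \<in> V" using LN unfolding liability_network_def by blast
lemma Xob: "v \<in> V \<Longrightarrow> X v \<in> Ob C" using LN unfolding liability_network_def by blast
lemma iota_hom: "v \<in> V \<Longrightarrow> iota v \<in> hom C one (X v)" using LN unfolding liability_network_def by blast
lemma delta_hom: "e \<in> E \<Longrightarrow> delta e \<in> hom C (X (s e)) (XL e)" using LN unfolding liability_network_def by blast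
lemma Pin_prod: "v \<in> V \<Longrightarrow> is_product C {e\<in>E. t e = v} XL (Pin v) (prIn v)"
  using LN unfolding liability_network_def by blast
lemma XP_prod: "v \<in> V \<Longrightarrow> is_product C UNIV (bin (X v) (Pin v)) (XP v) (prXP v)"
  using LN unfolding liability_network_def by blast
lemma ahat_hom: "v \<in> V \<Longrightarrow> ahat v \<in> hom C (XP v) (X v)" using LN unfolding liability_network_def by blast
lemma Pin_ob: "v \<in> V \<Longrightarrow> Pin v \<in> Ob C" using prod_ob[OF Pin_prod] .

lemma bang: "Y \<in> Ob C \<Longrightarrow> (THE u. u \<in> hom C Y one) \<in> hom C Y one"
  using termin unfolding is_terminal_def by (metis theI')

lemma alpha_hom: assumes v: "v \<in> V" shows "alpha v \<in> hom C (Pin v) (X v)"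
proof -
  let ?f = "(\<lambda>i. if i then comp C (iota v) (THE u. u \<in> hom C (Pin v) one) else idt C (Pin v))"
  have "\<forall>i\<in>UNIV. ?f i \<in> hom C (Pin v) (bin (X v) (Pin v) i)"
  proof
    fix i :: bool
    show "?f i \<in> hom C (Pin v) (bin (X v) (Pin v) i)"
    proof (cases i)
      case True
      then show ?thesis using cat_comp[OF cat bang[OF Pin_ob[OF v]] iota_hom[OF v]] by (simp add: bin_def)
    next
      case False
      then show ?thesis using cat_id[OF cat Pin_ob[OF v]] by (simp add: bin_def)
    qed
  qed
  from prod_tuple[OF XP_prod[OF v] Pin_ob[OF v] this]
  have "tuple C UNIV (XP v) (prXP v) (Pin v) ?f \<in> hom C (Pin v) (XP v)" by blast
  from cat_comp[OF cat this ahat_hom[OF v]]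
  show ?thesis unfolding net_alpha_def partial_agg_def .
qed

lemma P_ob: "P \<in> Ob C" using prod_ob[OF HP] .
lemma B_ob: "B \<in> Ob C" using prod_ob[OF HB] .

lemma Din: "Din \<in> hom C P B \<and> (\<forall>e\<in>E. comp C (prB e) Din = comp C (delta e) (prP (s e)))"
proof (rule prod_tuple[OF HB P_ob])
  show "\<forall>e\<in>E. comp C (delta e) (prP (s e)) \<in> hom C P (XL e)"
    using cat_comp[OF cat prod_pr[OF HP sE] delta_hom] by blast
qed

lemma tinB: assumes v: "v \<in> V"
  shows "tin v B prB \<in> hom C B (Pin v) \<and> (\<forall>e\<in>{e\<in>E. t e = v}. comp C (prIn v e) (tin v B prB) = prB e)"
  by (rule prod_tuple[OF Pin_prod[OF v] B_ob]) (use prod_pr[OF HB] in auto)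

lemma Ain: "Ain \<in> hom C B P \<and> (\<forall>v\<in>V. comp C (prP v) Ain = comp C (alpha v) (tin v B prB))"
proof (rule prod_tuple[OF HP B_ob])
  show "\<forall>v\<in>V. comp C (alpha v) (tin v B prB) \<in> hom C B (X v)"
    using cat_comp[OF cat conjunct1[OF tinB] alpha_hom] by blast
qed

lemma AD_hom: "AD \<in> hom C P P" using cat_comp[OF cat conjunct1[OF Din] conjunct1[OF Ain]] .

lemma key:
  assumes z: "z \<in> hom C Y P" and v: "v \<in> V"
  shows "comp C (prP v) (comp C AD z) = comp C (alpha v) (tin v Y (\<lambda>e. comp C (delta e) (comp C (prP (s e)) z)))"
proof -
  have D: "Din \<in> hom C P B" and A: "Ain \<in> hom C B P" using Din Ain by auto
  have Dz: "comp C Din z \<in> hom C Y B" using cat_comp[OF cat z D] .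
  have pv: "prP v \<in> hom C P (X v)" using prod_pr[OF HP v] .
  have T: "tin v B prB \<in> hom C B (Pin v)" using tinB[OF v] by blast
  have al: "alpha v \<in> hom C (Pin v) (X v)" using alpha_hom[OF v] .
  have eq1: "comp C (prP v) (comp C AD z) = comp C (comp C (prP v) Ain) (comp C Din z)"
    using cat_assoc[OF cat z D A] cat_assoc[OF cat Dz A pv] by simp
  have eq2: "comp C (prP v) Ain = comp C (alpha v) (tin v B prB)" using Ain v by blast
  have eq3: "comp C (comp C (alpha v) (tin v B prB)) (comp C Din z) = comp C (alpha v) (comp C (tin v B prB) (comp C Din z))"
    using cat_assoc[OF cat Dz T al] by simp
  have TDz: "comp C (tin v B prB) (comp C Din z) \<in> hom C Y (Pin v)" using cat_comp[OF cat Dz T] .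
  have eq4: "tin v Y (\<lambda>e. comp C (delta e) (comp C (prP (s e)) z)) = comp C (tin v B prB) (comp C Din z)"
  proof (rule prod_tuple_eq[OF cat Pin_prod[OF v] TDz], rule ballI)
    fix e assume e: "e \<in> {e\<in>E. t e = v}"
    then have eE: "e \<in> E" by simp
    have pe: "prIn v e \<in> hom C (Pin v) (XL e)" using prod_pr[OF Pin_prod[OF v] e] .
    have pB: "prB e \<in> hom C B (XL e)" using prod_pr[OF HB eE] .
    have ps: "prP (s e) \<in> hom C P (X (s e))" using prod_pr[OF HP sE[OF eE]] .
    have "comp C (prIn v e) (comp C (tin v B prB) (comp C Din z)) = comp C (comp C (prIn v e) (tin v B prB)) (comp C Din z)"
      using cat_assoc[OF cat Dz T pe] .
    also have "\<dots> = comp C (prB e) (comp C Din z)" using tinB[OF v] e by simp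
    also have "\<dots> = comp C (comp C (prB e) Din) z" using cat_assoc[OF cat z D pB] .
    also have "\<dots> = comp C (comp C (delta e) (prP (s e))) z" using Din eE by simp
    also have "\<dots> = comp C (delta e) (comp C (prP (s e)) z)" using cat_assoc[OF cat z ps delta_hom[OF eE]] by simp
    finally show "comp C (prIn v e) (comp C (tin v B prB) (comp C Din z)) = comp C (delta e) (comp C (prP (s e)) z)" .
  qed
  show ?thesis using eq1 eq2 eq3 eq4 by simp
qed


definition cone_of :: "'a \<Rightarrow> ('v,'e) inode \<Rightarrow> 'a" where
  "cone_of z = (\<lambda>n. case n of Vx v \<Rightarrow> comp C (prP v) z | Hd v \<Rightarrow> comp C (prP v) z
     | Es e \<Rightarrow> comp C (delta e) (comp C (prP (s e)) z)
     | Ha v \<Rightarrow> tin v (dom C z) (\<lambda>e. comp C (delta e) (comp C (prP (s e)) z)))"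

lemma Mor_ok: "\<forall>(h,w)\<in>Mor. h \<in> Nd \<and> w \<in> Nd \<and> Fm h w \<in> hom C (Fo h) (Fo w)"
proof
  fix p assume p: "p \<in> Mor"
  show "case p of (h,w) \<Rightarrow> h \<in> Nd \<and> w \<in> Nd \<and> Fm h w \<in> hom C (Fo h) (Fo w)"
  using p proof (cases rule: incid_E)
    case (hdv v) then show ?thesis using cat_id[OF cat Xob] by simp
  next
    case (hde e) then show ?thesis using delta_hom sE by simp
  next
    case (hae e)
    have "prIn (t e) e \<in> hom C (Pin (t e)) (XL e)" using prod_pr[OF Pin_prod[OF tE[OF hae(1)]]] hae(1) by simp
    then show ?thesis using hae tE by simp
  next
    case (hav v) then show ?thesis using alpha_hom by simp
  qed
qed

lemma ED: assumes "e \<in> E" "z \<in> hom C Y P"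
  shows "comp C (delta e) (comp C (prP (s e)) z) \<in> hom C Y (XL e)"
  using cat_comp[OF cat cat_comp[OF cat assms(2) prod_pr[OF HP sE[OF assms(1)]]] delta_hom[OF assms(1)]] .

lemma tinY: assumes v: "v \<in> V" and z: "z \<in> hom C Y P"
  shows "tin v Y (\<lambda>e. comp C (delta e) (comp C (prP (s e)) z)) \<in> hom C Y (Pin v) \<and>
    (\<forall>e\<in>{e\<in>E. t e = v}. comp C (prIn v e) (tin v Y (\<lambda>e. comp C (delta e) (comp C (prP (s e)) z))) = comp C (delta e) (comp C (prP (s e)) z))"
  by (rule prod_tuple[OF Pin_prod[OF v]]) (use hom_ob[OF cat z] ED[OF _ z] in auto)

lemma dom_hom: "z \<in> hom C Y W \<Longrightarrow> dom C z = Y" unfolding hom_def by simp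

lemma cone_of_cone:
  assumes z: "z \<in> hom C Y P" and zfix: "comp C AD z = z"
  shows "is_cone C Nd Mor Fo Fm Y (cone_of z)"
  unfolding is_cone_def
proof (intro conjI ballI)
  show "Y \<in> Ob C" using hom_ob[OF cat z] by blast
next
  fix x assume x: "x \<in> Nd"
  show "cone_of z x \<in> hom C Y (Fo x)"
  using x proof (cases rule: inodes_E)
    case (vx v) then show ?thesis using cat_comp[OF cat z prod_pr[OF HP]] by (simp add: cone_of_def)
  next
    case (hd v) then show ?thesis using cat_comp[OF cat z prod_pr[OF HP]] by (simp add: cone_of_def)
  next
    case (es e) then show ?thesis using ED[OF _ z] by (simp add: cone_of_def)
  next
    case (ha v) then show ?thesis using tinY[OF _ z] by (simp add: cone_of_def dom_hom[OF z])
  qed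
next
  fix p assume p: "p \<in> Mor"
  show "case p of (h,w) \<Rightarrow> comp C (Fm h w) (cone_of z h) = cone_of z w"
  using p proof (cases rule: incid_E)
    case (hdv v) then show ?thesis using cat_idl[OF cat cat_comp[OF cat z prod_pr[OF HP]]] by (simp add: cone_of_def)
  next
    case (hde e) then show ?thesis by (simp add: cone_of_def)
  next
    case (hae e) then show ?thesis using tinY[OF tE[OF hae(1)] z] by (simp add: cone_of_def dom_hom[OF z])
  next
    case (hav v) then show ?thesis using key[OF z hav(1)] zfix by (simp add: cone_of_def dom_hom[OF z])
  qed
qed

lemma cone_to_z:
  assumes cone: "is_cone C Nd Mor Fo Fm Y c"
  defines "z \<equiv> tuple C V P prP Y (\<lambda>v. c (Vx v))"
  shows "z \<in> hom C Y P \<and> comp C AD z = z \<and> (\<forall>x\<in>Nd. cone_of z x = c x)"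
proof -
  have Y: "Y \<in> Ob C" using cone unfolding is_cone_def by blast
  have cx: "\<And>x. x \<in> Nd \<Longrightarrow> c x \<in> hom C Y (Fo x)" using cone unfolding is_cone_def by blast
  have cm: "\<And>h w. (h,w) \<in> Mor \<Longrightarrow> comp C (Fm h w) (c h) = c w" using cone unfolding is_cone_def by blast
  have zz: "z \<in> hom C Y P \<and> (\<forall>v\<in>V. comp C (prP v) z = c (Vx v))"
    unfolding z_def by (rule prod_tuple[OF HP Y]) (use cx[of "Vx _"] in auto)
  then have z: "z \<in> hom C Y P" and pz: "\<And>v. v \<in> V \<Longrightarrow> comp C (prP v) z = c (Vx v)" by auto
  have cHd: "c (Hd v) = c (Vx v)" if v: "v \<in> V" for v
  proof -
    have "(Hd v, Vx v) \<in> Mor" using v unfolding incid_def by blast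
    from cm[OF this] have "comp C (idt C (X v)) (c (Hd v)) = c (Vx v)" by simp
    moreover have "c (Hd v) \<in> hom C Y (X v)" using cx[of "Hd v"] v by simp
    ultimately show ?thesis using cat_idl[OF cat] by simp
  qed
  have cEs: "c (Es e) = comp C (delta e) (comp C (prP (s e)) z)" if e: "e \<in> E" for e
  proof -
    have "(Hd (s e), Es e) \<in> Mor" using e unfolding incid_def by blast
    from cm[OF this] have "c (Es e) = comp C (delta e) (c (Hd (s e)))" by simp
    then show ?thesis using cHd[OF sE[OF e]] pz[OF sE[OF e]] by simp
  qed
  have cHa: "c (Ha v) = tin v Y (\<lambda>e. comp C (delta e) (comp C (prP (s e)) z))" if v: "v \<in> V" for v
  proof -
    have h1: "c (Ha v) \<in> hom C Y (Pin v)" using cx[of "Ha v"] v by simp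
    have h2: "\<forall>e\<in>{e\<in>E. t e = v}. comp C (prIn v e) (c (Ha v)) = comp C (delta e) (comp C (prP (s e)) z)"
    proof
      fix e assume e: "e \<in> {e\<in>E. t e = v}"
      then have "(Ha (t e), Es e) \<in> Mor" unfolding incid_def by blast
      from cm[OF this] e cEs show "comp C (prIn v e) (c (Ha v)) = comp C (delta e) (comp C (prP (s e)) z)" by simp
    qed
    show ?thesis using prod_tuple_eq[OF cat Pin_prod[OF v] h1 h2] by simp
  qed
  have co: "\<forall>x\<in>Nd. cone_of z x = c x"
  proof
    fix x assume x: "x \<in> Nd"
    show "cone_of z x = c x"
    using x proof (cases rule: inodes_E)
      case (vx v) then show ?thesis using pz by (simp add: cone_of_def)
    next
      case (hd v) then show ?thesis using pz cHd by (simp add: cone_of_def)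
    next
      case (es e) then show ?thesis using cEs by (simp add: cone_of_def)
    next
      case (ha v) then show ?thesis using cHa by (simp add: cone_of_def dom_hom[OF z])
    qed
  qed
  have "comp C AD z = z"
  proof (rule prod_uniq[OF cat HP cat_comp[OF cat z AD_hom] z], rule ballI)
    fix v assume v: "v \<in> V"
    have "(Ha v, Vx v) \<in> Mor" using v unfolding incid_def by blast
    from cm[OF this] have "comp C (alpha v) (c (Ha v)) = c (Vx v)" by simp
    then show "comp C (prP v) (comp C AD z) = comp C (prP v) z"
      using key[OF z v] cHa[OF v] pz[OF v] by simp
  qed
  with z co show ?thesis by blast
qed

lemma cone_of_comp:
  assumes z: "z \<in> hom C Y P" and u: "u \<in> hom C W Y" and x: "x \<in> Nd"
  shows "comp C (cone_of z x) u = cone_of (comp C z u) x"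
proof -
  have zu: "comp C z u \<in> hom C W P" using cat_comp[OF cat u z] .
  show ?thesis
  using x proof (cases rule: inodes_E)
    case (vx v) then show ?thesis using cat_assoc[OF cat u z prod_pr[OF HP]] by (simp add: cone_of_def)
  next
    case (hd v) then show ?thesis using cat_assoc[OF cat u z prod_pr[OF HP]] by (simp add: cone_of_def)
  next
    case (es e)
    have ps: "prP (s e) \<in> hom C P (X (s e))" using prod_pr[OF HP sE[OF es(1)]] .
    have "comp C (comp C (delta e) (comp C (prP (s e)) z)) u = comp C (delta e) (comp C (comp C (prP (s e)) z) u)"
      using cat_assoc[OF cat u cat_comp[OF cat z ps] delta_hom[OF es(1)]] by simp
    also have "\<dots> = comp C (delta e) (comp C (prP (s e)) (comp C z u))"
      using cat_assoc[OF cat u z ps] by simp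
    finally show ?thesis using es by (simp add: cone_of_def)
  next
    case (ha v)
    have T: "tin v Y (\<lambda>e. comp C (delta e) (comp C (prP (s e)) z)) \<in> hom C Y (Pin v)" using tinY[OF ha(1) z] by blast
    have "tin v W (\<lambda>e. comp C (delta e) (comp C (prP (s e)) (comp C z u))) =
          comp C (tin v Y (\<lambda>e. comp C (delta e) (comp C (prP (s e)) z))) u"
    proof (rule prod_tuple_eq[OF cat Pin_prod[OF ha(1)] cat_comp[OF cat u T]], rule ballI)
      fix e assume e: "e \<in> {e\<in>E. t e = v}"
      then have eE: "e \<in> E" by simp
      have ps: "prP (s e) \<in> hom C P (X (s e))" using prod_pr[OF HP sE[OF eE]] .
      have pe: "prIn v e \<in> hom C (Pin v) (XL e)" using prod_pr[OF Pin_prod[OF ha(1)] e] .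
      have "comp C (prIn v e) (comp C (tin v Y (\<lambda>e. comp C (delta e) (comp C (prP (s e)) z))) u)
          = comp C (comp C (prIn v e) (tin v Y (\<lambda>e. comp C (delta e) (comp C (prP (s e)) z)))) u"
        using cat_assoc[OF cat u T pe] .
      also have "\<dots> = comp C (comp C (delta e) (comp C (prP (s e)) z)) u" using tinY[OF ha(1) z] e by simp
      also have "\<dots> = comp C (delta e) (comp C (comp C (prP (s e)) z) u)"
        using cat_assoc[OF cat u cat_comp[OF cat z ps] delta_hom[OF eE]] by simp
      also have "\<dots> = comp C (delta e) (comp C (prP (s e)) (comp C z u))"
        using cat_assoc[OF cat u z ps] by simp
      finally show "comp C (prIn v e) (comp C (tin v Y (\<lambda>e. comp C (delta e) (comp C (prP (s e)) z))) u)
          = comp C (delta e) (comp C (prP (s e)) (comp C z u))" .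
    qed
    then show ?thesis using ha by (simp add: cone_of_def dom_hom[OF z] dom_hom[OF zu])
  qed
qed


lemma q_facts: assumes EQ: "is_equalizer C (idt C P) AD Q q"
  shows "q \<in> hom C Q P \<and> comp C AD q = q"
proof -
  have "dom C (idt C P) = P" using cat_id[OF cat P_ob] unfolding hom_def by simp
  then have q: "q \<in> hom C Q P" and "comp C (idt C P) q = comp C AD q" using eq_q[OF EQ] by auto
  then show ?thesis using cat_idl[OF cat q] by simp
qed

lemma eq_lim: assumes EQ: "is_equalizer C (idt C P) AD Q q"
  shows "is_limit C Nd Mor Fo Fm Q (cone_of q)"
proof -
  have q: "q \<in> hom C Q P" and qf: "comp C AD q = q" using q_facts[OF EQ] by auto
  have dP: "dom C (idt C P) = P" using cat_id[OF cat P_ob] unfolding hom_def by simp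
  have "\<exists>!u. u \<in> hom C L' Q \<and> (\<forall>x\<in>Nd. comp C (cone_of q x) u = c' x)"
    if cone: "is_cone C Nd Mor Fo Fm L' c'" for L' c'
  proof -
    define z where "z = tuple C V P prP L' (\<lambda>v. c' (Vx v))"
    have z: "z \<in> hom C L' P" and zf: "comp C AD z = z" and zc: "\<forall>x\<in>Nd. cone_of z x = c' x"
      using cone_to_z[OF cone] unfolding z_def by auto
    have e1: "comp C (idt C P) z = comp C AD z" using cat_idl[OF cat z] zf by simp
    have e2: "z \<in> hom C L' (dom C (idt C P))" using z dP by simp
    obtain u where u: "u \<in> hom C L' Q" and qu: "comp C q u = z"
      using eq_univ[OF EQ e2 e1] by blast
    show ?thesis
    proof (rule ex1I[of _ u])
      show "u \<in> hom C L' Q \<and> (\<forall>x\<in>Nd. comp C (cone_of q x) u = c' x)"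
        using u cone_of_comp[OF q u] qu zc by simp
    next
      fix u' assume u': "u' \<in> hom C L' Q \<and> (\<forall>x\<in>Nd. comp C (cone_of q x) u' = c' x)"
      have qu': "comp C q u' \<in> hom C L' P" using cat_comp[OF cat _ q] u' by blast
      have "comp C q u' = z"
      proof (rule prod_uniq[OF cat HP qu' z], rule ballI)
        fix v assume v: "v \<in> V"
        have "comp C (prP v) (comp C q u') = comp C (cone_of q (Vx v)) u'"
          using cat_assoc[OF cat conjunct1[OF u'] q prod_pr[OF HP v]] by (simp add: cone_of_def)
        also have "\<dots> = c' (Vx v)" using u' v by simp
        also have "\<dots> = comp C (prP v) z" using bspec[OF zc, of "Vx v"] v by (simp add: cone_of_def)
        finally show "comp C (prP v) (comp C q u') = comp C (prP v) z" .
      qed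
      then show "u' = u" using eq_uniq[OF cat EQ _ u] u' qu by simp
    qed
  qed
  then show ?thesis unfolding is_limit_def using cone_of_cone[OF q qf] by blast
qed

lemma lim_iso: assumes LIM: "is_limit C Nd Mor Fo Fm L c" and EQ: "is_equalizer C (idt C P) AD Q q"
  shows "\<exists>\<phi>. \<phi> \<in> hom C L Q \<and> iso C \<phi> \<and> comp C q \<phi> = tuple C V P prP L (\<lambda>v. c (Vx v))"
proof -
  have cone: "is_cone C Nd Mor Fo Fm L c" using LIM unfolding is_limit_def by blast
  have cx: "\<And>x. x \<in> Nd \<Longrightarrow> c x \<in> hom C L (Fo x)" using cone unfolding is_cone_def by blast
  have L: "L \<in> Ob C" using cone unfolding is_cone_def by blast
  have q: "q \<in> hom C Q P" and qf: "comp C AD q = q" using q_facts[OF EQ] by auto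
  have Q: "Q \<in> Ob C" using hom_ob[OF cat q] by blast
  have dP: "dom C (idt C P) = P" using cat_id[OF cat P_ob] unfolding hom_def by simp
  define z where "z = tuple C V P prP L (\<lambda>v. c (Vx v))"
  have z: "z \<in> hom C L P" and zf: "comp C AD z = z" and zc: "\<forall>x\<in>Nd. cone_of z x = c x"
    using cone_to_z[OF cone] unfolding z_def by auto
  have e1: "comp C (idt C P) z = comp C AD z" using cat_idl[OF cat z] zf by simp
  have e2: "z \<in> hom C L (dom C (idt C P))" using z dP by simp
  obtain phi where phi: "phi \<in> hom C L Q" and qphi: "comp C q phi = z"
    using eq_univ[OF EQ e2 e1] by blast
  from lim_U[OF LIM cone_of_cone[OF q qf]] obtain psi where psi: "psi \<in> hom C Q L"
    and cpsi: "\<forall>x\<in>Nd. comp C (c x) psi = cone_of q x" by blast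
  have pp: "comp C phi psi \<in> hom C Q Q" using cat_comp[OF cat psi phi] .
  have pp2: "comp C psi phi \<in> hom C L L" using cat_comp[OF cat phi psi] .
  have zpsi: "comp C z psi = q"
  proof (rule prod_uniq[OF cat HP cat_comp[OF cat psi z] q], rule ballI)
    fix v assume v: "v \<in> V"
    have "comp C (prP v) (comp C z psi) = comp C (comp C (prP v) z) psi"
      using cat_assoc[OF cat psi z prod_pr[OF HP v]] .
    also have "\<dots> = comp C (c (Vx v)) psi" using bspec[OF zc, of "Vx v"] v by (simp add: cone_of_def)
    also have "\<dots> = comp C (prP v) q" using bspec[OF cpsi, of "Vx v"] v by (simp add: cone_of_def)
    finally show "comp C (prP v) (comp C z psi) = comp C (prP v) q" .
  qed
  have id1: "comp C phi psi = idt C Q"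
  proof (rule eq_uniq[OF cat EQ pp cat_id[OF cat Q]])
    show "comp C q (comp C phi psi) = comp C q (idt C Q)"
      using cat_assoc[OF cat psi phi q] qphi zpsi cat_idr[OF cat q] by simp
  qed
  have id2: "comp C psi phi = idt C L"
  proof (rule lim_uniq[OF cat LIM Mor_ok pp2 cat_id[OF cat L]], rule ballI)
    fix x assume x: "x \<in> Nd"
    have "comp C (c x) (comp C psi phi) = comp C (comp C (c x) psi) phi"
      using cat_assoc[OF cat phi psi cx[OF x]] .
    also have "\<dots> = comp C (cone_of q x) phi" using cpsi x by simp
    also have "\<dots> = cone_of z x" using cone_of_comp[OF q phi x] qphi by simp
    also have "\<dots> = comp C (c x) (idt C L)" using zc x cat_idr[OF cat cx[OF x]] by simp
    finally show "comp C (c x) (comp C psi phi) = comp C (c x) (idt C L)" .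
  qed
  have "iso C phi"
    unfolding iso_def
  proof (intro conjI bexI[of _ psi])
    show "phi \<in> Ar C" using phi unfolding hom_def by simp
    show "psi \<in> hom C (cod C phi) (dom C phi)" using phi psi unfolding hom_def by simp
    show "comp C psi phi = idt C (dom C phi)" using id2 phi unfolding hom_def by simp
    show "comp C phi psi = idt C (cod C phi)" using id1 phi unfolding hom_def by simp
  qed
  then show ?thesis using phi qphi unfolding z_def by blast
qed

lemma main:
  shows "(\<exists>L c. is_limit C Nd Mor Fo Fm L c) \<and>
         (\<forall>L c Q q. is_limit C Nd Mor Fo Fm L c \<longrightarrow> is_equalizer C (idt C P) AD Q q \<longrightarrow>
            (\<exists>\<phi>. \<phi> \<in> hom C L Q \<and> iso C \<phi> \<and>
                 comp C q \<phi> = tuple C V P prP L (\<lambda>v. c (Vx v))))"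
proof
  have i: "idt C P \<in> hom C P P" using cat_id[OF cat P_ob] .
  then obtain Q q where "is_equalizer C (idt C P) AD Q q"
    using eqex[of "idt C P" AD] AD_hom unfolding hom_def by auto
  then show "\<exists>L c. is_limit C Nd Mor Fo Fm L c" by (intro exI) (rule eq_lim)
next
  show "\<forall>L c Q q. is_limit C Nd Mor Fo Fm L c \<longrightarrow> is_equalizer C (idt C P) AD Q q \<longrightarrow>
            (\<exists>\<phi>. \<phi> \<in> hom C L Q \<and> iso C \<phi> \<and>
                 comp C q \<phi> = tuple C V P prP L (\<lambda>v. c (Vx v)))"
    by (intro allI impI) (rule lim_iso)
qed

end

theorem mainTheorem2:
  fixes C :: "('o,'a) cat" and one :: 'o
    and le :: "'o \<Rightarrow> 'a \<Rightarrow> 'a \<Rightarrow> bool" and S :: "'o \<Rightarrow> 'a set" and bsel :: "'o \<Rightarrow> 'a \<Rightarrow> 'a"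
    and V :: "'v set" and E :: "'e set" and s t :: "'e \<Rightarrow> 'v"
    and X :: "'v \<Rightarrow> 'o" and lam :: "'e \<Rightarrow> 'a" and iota :: "'v \<Rightarrow> 'a" and delta :: "'e \<Rightarrow> 'a"
    and Pin :: "'v \<Rightarrow> 'o" and prIn :: "'v \<Rightarrow> 'e \<Rightarrow> 'a"
    and XP :: "'v \<Rightarrow> 'o" and prXP :: "'v \<Rightarrow> bool \<Rightarrow> 'a" and ahat :: "'v \<Rightarrow> 'a"
    and P :: 'o and prP :: "'v \<Rightarrow> 'a" and B :: 'o and prB :: "'e \<Rightarrow> 'a"
  assumes LC: "liability_category C one le S bsel"
    and LN: "liability_network C one S bsel V E s t X lam iota delta Pin prIn XP prXP ahat"
    and HP: "is_product C V X P prP"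
    and HB: "is_product C E (Xlam C bsel s X lam) B prB"
  defines "D \<equiv> tuple C E B prB P (\<lambda>e. comp C (delta e) (prP (s e)))"
    and "A \<equiv> tuple C V P prP B
               (\<lambda>v. comp C (net_alpha C one X Pin XP prXP iota ahat v) (tuple C {e\<in>E. t e = v} (Pin v) (prIn v) B prB))"
    and "Nd \<equiv> inodes V E"
    and "Mor \<equiv> incid V E s t"
    and "Fo \<equiv> sheaf_ob (Xlam C bsel s X lam) X Pin"
    and "Fm \<equiv> sheaf_mor C X delta prIn (net_alpha C one X Pin XP prXP iota ahat)"
  shows "(\<exists>L c. is_limit C Nd Mor Fo Fm L c) \<and>
         (\<forall>L c Q q. is_limit C Nd Mor Fo Fm L c \<longrightarrow> is_equalizer C (idt C P) (comp C A D) Q q \<longrightarrow>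
            (\<exists>\<phi>. \<phi> \<in> hom C L Q \<and> iso C \<phi> \<and>
                 comp C q \<phi> = tuple C V P prP L (\<lambda>v. c (Vx v))))"
proof -
  interpret N: LNW C one le S bsel V E s t X lam iota delta Pin prIn XP prXP ahat P prP B prB
    using LC LN HP HB by (unfold_locales)
  show ?thesis unfolding D_def A_def Nd_def Mor_def Fo_def Fm_def by (rule N.main)
qed

end
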